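(* For $\omega>0$ and $S>0$ let $\sigma=e^{-\sqrt6 S}$, $A=\sqrt{1+\frac{\omega}{2S^2}}$, and $$\Xi(S,\omega)={}_2F_1(1,2A+2,2A+3,\sigma)=(2A+2)\sum_{n\ge0}\frac{\sigma^n}{n+2A+2}.$$ Then, as $S\to0^+$ with $\omega$ fixed, $$\Xi(S,\omega)=\xi_{-1}\bigl(2\sqrt{3\omega}\bigr)\frac{\sqrt6}{S}+\xi_0\bigl(2\sqrt{3\omega}\bigr)+O(S),$$ where $\xi_{-1}(r)=\frac16\,r\,e^rE_1(r)$, $\xi_0(r)=\frac12\bigl(4(1+r)e^rE_1(r)-3\bigr)$ and $E_1(r)=\int_r^\infty e^{-t}\frac{dt}{t}$. *)

theory Defs
  imports "HOL-Analysis.Analysis" "HOL-Library.Landau_Symbols"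
begin

definition E1 :: "real \<Rightarrow> real" where
  "E1 r = integral {r..} (\<lambda>t. exp (- t) / t)"

definition xi_m1 :: "real \<Rightarrow> real" where
  "xi_m1 r = (1/6) * r * exp r * E1 r"

definition xi_0 :: "real \<Rightarrow> real" where
  "xi_0 r = (1/2) * (4 * (1 + r) * exp r * E1 r - 3)"

definition sigma_par :: "real \<Rightarrow> real" where
  "sigma_par S = exp (- sqrt 6 * S)"

definition A_par :: "real \<Rightarrow> real \<Rightarrow> real" where
  "A_par S \<omega> = sqrt (1 + \<omega> / (2 * S\<^sup>2))"

definition Xi :: "real \<Rightarrow> real \<Rightarrow> real" where
  "Xi S \<omega> = (2 * A_par S \<omega> + 2) *
     (\<Sum>n. sigma_par S ^ n / (real n + 2 * A_par S \<omega> + 2))"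

end

theory Submission imports Defs "HOL-Real_Asymp.Real_Asymp" begin

lemma nonneg_from_deriv:
  fixes f f' :: "real \<Rightarrow> real"
  assumes "f 0 = 0" "\<And>t. (f has_real_derivative f' t) (at t)" "\<And>t. t \<ge> 0 \<Longrightarrow> f' t \<ge> 0" "y \<ge> 0"
  shows "f y \<ge> 0"
proof -
  have "f 0 \<le> f y"
  proof (rule DERIV_nonneg_imp_increasing_open[of 0 y f])
    show "continuous_on {0..y} f"
      by (meson DERIV_isCont assms(2) continuous_at_imp_continuous_on)
  qed (use assms in \<open>auto intro!: exI[of _ "f' _"]\<close>)
  thus ?thesis using assms by simp
qed

lemma F_ineq: assumes "y \<ge> (0::real)" shows "2 * (exp y - 1) \<le> y * (exp y + 1)"
proof -
  have d1: "1 - exp t + t * exp t \<ge> 0" if "t \<ge> 0" for t :: real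
    by (rule nonneg_from_deriv[where f="\<lambda>t. 1 - exp t + t * exp t" and f'="\<lambda>t. t * exp t"])
       (auto intro!: derivative_eq_intros simp: that)
  have "y * (exp y + 1) - 2 * (exp y - 1) \<ge> 0"
    apply (rule nonneg_from_deriv[where f="\<lambda>y. y * (exp y + 1) - 2 * (exp y - 1)" and f'="\<lambda>t. 1 - exp t + t * exp t"])
    subgoal by simp
    subgoal by (auto intro!: derivative_eq_intros simp: algebra_simps)
    subgoal using d1 by simp
    using assms by simp
  thus ?thesis by simp
qed

lemma G_ineq: assumes "y \<ge> (0::real)" shows "2 * y*(exp y + 1) \<le> (y^2+4) * (exp y - 1)"
proof -
  have d2: "2 * exp t - 2 + 2 * t*exp t + t^2 * exp t \<ge> 0" if "t \<ge> 0" for t :: real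
  proof -
    have "exp t \<ge> 1" using that by simp
    thus ?thesis using that by (simp add: add_nonneg_nonneg)
  qed
  have d1: "-2 * t + t^2 * exp t + 2 * exp t - 2 \<ge> 0" if "t \<ge> 0" for t :: real
    apply (rule nonneg_from_deriv[where f="\<lambda>t. -2 * t + t^2 * exp t + 2 * exp t - 2" and f'="\<lambda>t. 2 * exp t - 2 + 2 * t*exp t + t^2 * exp t"])
    subgoal by simp
    subgoal by (auto intro!: derivative_eq_intros simp: algebra_simps power2_eq_square)
    subgoal using d2 by simp
    using that by simp
  have "(y^2+4) * (exp y - 1) - 2 * y*(exp y + 1) \<ge> 0"
    apply (rule nonneg_from_deriv[where f="\<lambda>y. (y^2+4) * (exp y - 1) - 2 * y*(exp y + 1)" and f'="\<lambda>t. -2 * t + t^2 * exp t + 2 * exp t - 2"])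
    subgoal by simp
    subgoal by (auto intro!: derivative_eq_intros simp: algebra_simps power2_eq_square)
    subgoal using d1 by simp
    using assms by simp
  thus ?thesis by simp
qed

lemma g_bound:
  fixes y :: real assumes "y > 0"
  shows "0 \<le> 1/(1-exp(-y)) - 1/y - 1/2" "1/(1-exp(-y)) - 1/y - 1/2 \<le> y/4"
proof -
  define p where "p = exp y"
  have p1: "p > 1" using assms by (simp add: p_def)
  have e: "1/(1-exp(-y)) = p/(p-1)" using p1 by (simp add: p_def exp_minus field_simps)
  have F: "2 * (p - 1) \<le> y * (p + 1)" using F_ineq[of y] assms by (simp add: p_def)
  have G: "2 * y*(p + 1) \<le> (y^2+4) * (p - 1)" using G_ineq[of y] assms by (simp add: p_def)
  have "p/(p-1) - 1/y - 1/2 = (y * (p+1) - 2 * (p-1)) / (2 * y*(p-1))"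
    using p1 assms by (simp add: field_simps)
  also have "\<dots> \<ge> 0" using F p1 assms by (intro divide_nonneg_pos) auto
  finally show "0 \<le> 1/(1-exp(-y)) - 1/y - 1/2" using e by simp
  have "p/(p-1) - 1/y - 1/2 - y/4 = (2 * y*(p+1) - (y^2+4) * (p-1)) / (4 * y*(p-1))"
    using p1 assms by (simp add: field_simps power2_eq_square)
  also have "\<dots> \<le> 0" using G p1 assms by (intro divide_nonpos_pos) auto
  finally show "1/(1-exp(-y)) - 1/y - 1/2 \<le> y/4" using e by simp
qed

lemma integrable_dom:
  fixes f :: "real \<Rightarrow> real" and a K :: real
  assumes "continuous_on {a..} f" "\<And>v. v \<ge> a \<Longrightarrow> \<bar>f v\<bar> \<le> K * exp(-v)"
  shows "f integrable_on {a..}"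
proof (rule measurable_bounded_by_integrable_imp_integrable_real)
  show "f \<in> borel_measurable (lebesgue_on {a..})"
    by (rule continuous_imp_measurable_on_sets_lebesgue) (use assms in auto)
  show "(\<lambda>v. K * exp (- 1 * v)) integrable_on {a..}"
    using integrable_on_cmult_left[OF integrable_on_exp_minus_to_infinity[of 1 a], of K] by simp
  show "\<bar>f x\<bar> \<le> K * exp (- 1 * x)" if "x \<in> {a..}" for x using assms that by simp
qed auto

definition Hf :: "real \<Rightarrow> real" where "Hf y = exp y * E1 y"

lemma H_int:
  assumes y: "y > 0"
  shows "((\<lambda>v. exp(-v)/(y+v)) has_integral Hf y) {0..}"
proof -
  let ?f = "\<lambda>t::real. exp(-t)/t"
  have fi: "?f integrable_on {y..}"
  proof (rule integrable_dom[where K="1/y"])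
    show "continuous_on {y..} ?f" using y by (intro continuous_intros) auto
    show "\<bar>?f v\<bar> \<le> 1/y * exp(-v)" if "v \<ge> y" for v
      using that y by (simp add: field_simps)
  qed
  have fa: "?f absolutely_integrable_on {y..}"
    by (rule nonnegative_absolutely_integrable_1[OF fi]) (use y in auto)
  have img: "(\<lambda>v. y + v) ` {0..} = {y..}"
    using image_add_atLeast[of y "0::real"] by (simp add: add.commute)
  have "(\<lambda>x. \<bar>1\<bar> * ?f (y + x)) absolutely_integrable_on {0..} \<and>
           integral {0..} (\<lambda>x. \<bar>1\<bar> * ?f (y + x)) = E1 y"
  proof (subst has_absolute_integral_change_of_variables_1'[where g="\<lambda>v. y + v" and g'="\<lambda>_. 1"])
    show "((\<lambda>v. y + v) has_real_derivative 1) (at x within {0..})" for x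
      by (auto intro!: derivative_eq_intros)
  qed (use fa img in \<open>auto simp: E1_def inj_on_def\<close>)
  then have "((\<lambda>x. ?f (y + x)) has_integral E1 y) {0..}"
    using set_lebesgue_integral_eq_integral absolutely_integrable_on_def
    by (metis (no_types, lifting) ext has_integral_integrable_integral mult_1 abs_one)
  from has_integral_mult_right[OF this, of "exp y"]
  show ?thesis unfolding Hf_def
  proof (rule has_integral_eq[rotated])
    fix x :: real assume "x \<in> {0..}"
    then have "y + x > 0" using y by auto
    have "exp y * exp (-(y+x)) = exp(-x)" by (simp flip: exp_add)
    then show "exp y * (exp (- (y + x)) / (y + x)) = exp (- x) / (y + x)"
      by (metis times_divide_eq_right)
  qed
qed

lemma summable_b:
  assumes s: "s > 0" and c: "c > 0"
  shows "summable (\<lambda>n. exp(-s)^n / (real n + c))"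
proof (rule summable_comparison_test[where g="\<lambda>n. (1/c) * exp(-s)^n"])
  show "summable (\<lambda>n. (1/c) * exp(-s)^n)"
    using s by (intro summable_mult summable_geometric) auto
  show "\<exists>N. \<forall>n\<ge>N. norm (exp(-s)^n / (real n + c)) \<le> (1/c) * exp(-s)^n"
    using c by (intro exI[of _ 0]) (auto simp: field_simps)
qed

lemma sum_int:
  assumes s: "s > 0" and c: "c > 0"
  shows "((\<lambda>v. exp(-v)/(1 - exp(-(s+v/c)))) has_integral (c * (\<Sum>n. exp(-s)^n / (real n + c)))) {0..}"
proof -
  define b where "b n = exp(-s)^n / (real n + c)" for n
  have sb: "summable b" unfolding b_def by (rule summable_b[OF s c])
  have b0: "b n \<ge> 0" for n using c by (simp add: b_def)
  define f where "f N v = (\<Sum>n<N. exp(-s)^n * exp(-(1 + real n/c)* v))" for N v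
  have fint: "(f N has_integral c * (\<Sum>n<N. b n)) {0..}" for N
  proof -
    have "(f N has_integral (\<Sum>n<N. exp(-s)^n * (exp (-(1 + real n/c) * 0)/(1 + real n/c)))) {0..}"
      unfolding f_def
      by (intro has_integral_sum has_integral_mult_right has_integral_exp_minus_to_infinity)
         (use c in \<open>auto intro: add_pos_nonneg\<close>)
    moreover have "(\<Sum>n<N. exp(-s)^n * (exp (-(1 + real n/c) * 0)/(1 + real n/c))) = c * (\<Sum>n<N. b n)"
      unfolding sum_distrib_left
      by (rule sum.cong) (use c in \<open>auto simp: b_def field_simps\<close>)
    ultimately show ?thesis by simp
  qed
  have fexp: "f N v = exp(-v) * (\<Sum>n<N. exp(-(s+v/c))^n)" for N v
    unfolding f_def sum_distrib_left
  proof (rule sum.cong)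
    fix n assume "n \<in> {..<N}"
    have "exp(-s)^n * exp(-(1 + real n/c)* v) = exp(real n * (-s)) * exp(-(1 + real n/c)* v)"
      by (simp only: exp_of_nat_mult)
    also have "\<dots> = exp(-v + real n * (-(s+v/c)))"
      by (simp flip: exp_add) (simp add: algebra_simps add_divide_distrib)
    also have "\<dots> = exp(-v) * exp(real n * (-(s+v/c)))"
      by (simp only: exp_add)
    also have "\<dots> = exp(-v) * exp(-(s+v/c))^n"
      by (simp only: exp_of_nat_mult)
    finally show "exp(-s)^n * exp(-(1 + real n/c)* v) = exp(-v) * exp(-(s+v/c))^n" .
  qed simp
  have mc: "(\<lambda>v. exp(-v)/(1 - exp(-(s+v/c)))) integrable_on {0..} \<and>
      ((\<lambda>k. integral {0..} (f k)) \<longlonglongrightarrow> integral {0..} (\<lambda>v. exp(-v)/(1 - exp(-(s+v/c)))))"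
  proof (rule monotone_convergence_increasing)
    show "f k integrable_on {0..}" for k using fint by blast
    show "f k x \<le> f (Suc k) x" for k x
      unfolding f_def by simp
    show "(\<lambda>k. f k x) \<longlonglongrightarrow> exp(-x)/(1 - exp(-(s+x/c)))" if "x \<in> {0..}" for x
    proof -
      have "s + x/c > 0" using that s c by (auto intro: add_pos_nonneg)
      then have q: "norm (exp(-(s+x/c))) < 1" by simp
      have "(\<lambda>k. \<Sum>n<k. exp(-(s+x/c))^n) \<longlonglongrightarrow> 1/(1 - exp(-(s+x/c)))"
        using geometric_sums[OF q] by (simp add: sums_def)
      from tendsto_mult_left[OF this, of "exp(-x)"]
      show ?thesis by (simp add: fexp)
    qed
    show "bounded (range (\<lambda>k. integral {0..} (f k)))"
    proof (rule boundedI[where B="c * suminf b"])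
      fix y assume "y \<in> range (\<lambda>k. integral {0..} (f k))"
      then obtain k where k: "y = c * (\<Sum>n<k. b n)" using fint integral_unique by blast
      have "0 \<le> (\<Sum>n<k. b n)" using b0 by (simp add: sum_nonneg)
      moreover have "(\<Sum>n<k. b n) \<le> suminf b" using sb b0 by (simp add: sum_le_suminf)
      ultimately show "norm y \<le> c * suminf b" using k c by (simp add: abs_of_nonneg)
    qed
  qed
  have "(\<lambda>k. integral {0..} (f k)) \<longlonglongrightarrow> c * suminf b"
  proof -
    have "integral {0..} (f k) = c * (\<Sum>n<k. b n)" for k using fint[of k] integral_unique by blast
    then show ?thesis using tendsto_mult_left[OF summable_LIMSEQ[OF sb], of c] by simp
  qed
  with mc have "integral {0..} (\<lambda>v. exp(-v)/(1 - exp(-(s+v/c)))) = c * suminf b"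
    using LIMSEQ_unique by blast
  with mc show ?thesis unfolding b_def by (metis has_integral_integrable_integral)
qed

lemma p_int:
  fixes r :: real
  assumes r: "r > 0"
  shows "((\<lambda>v. exp(-v)/(r+v) + exp(-v)/(r+v)^2) has_integral 1/r) {0..}"
proof (rule has_integral_to_inf)
  show "(\<lambda>v. exp(-v)/(r+v) + exp(-v)/(r+v)^2) integrable_on {0..y}" for y
    by (rule integrable_continuous_interval) (use r in \<open>auto intro!: continuous_intros\<close>)
  show "0 \<le> exp(-v)/(r+v) + exp(-v)/(r+v)^2" if "v \<ge> 0" for v
    using that r by (auto intro!: add_nonneg_nonneg)
  have "((\<lambda>v. exp(-v)/(r+v) + exp(-v)/(r+v)^2) has_integral (- exp(-y)/(r+y) - (- exp(-0)/(r+0)))) {0..y}"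
    if "y \<ge> 0" for y
    using that r
    apply (intro fundamental_theorem_of_calculus)
     apply (auto intro!: derivative_eq_intros
             simp flip: has_real_derivative_iff_has_vector_derivative)
    apply (simp add: divide_simps power2_eq_square)
    done
  then have "\<forall>\<^sub>F y in at_top. integral {0..y} (\<lambda>v. exp(-v)/(r+v) + exp(-v)/(r+v)^2) = 1/r - exp(-y)/(r+y)"
    unfolding eventually_at_top_linorder by (intro exI[of _ 0]) (auto dest!: integral_unique)
  moreover have "((\<lambda>y. 1/r - exp(-y)/(r+y)) \<longlongrightarrow> 1/r) at_top"
    using r by real_asymp
  ultimately show "((\<lambda>y. integral {0..y} (\<lambda>v. exp(-v)/(r+v) + exp(-v)/(r+v)^2)) \<longlongrightarrow> 1/r) at_top"
    by (simp add: filterlim_cong tendsto_cong)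
qed

lemma Jr_int:
  assumes r: "r > 0"
  shows "((\<lambda>v. exp(-v)* v/((r+v) * (r+v))) has_integral (1+r)*Hf r - 1) {0..}"
proof -
  have q: "((\<lambda>v. exp(-v)/(r+v)^2) has_integral 1/r - Hf r) {0..}"
    using has_integral_diff[OF p_int[OF r] H_int[OF r]] by simp
  have "((\<lambda>v. exp(-v)/(r+v) - r * (exp(-v)/(r+v)^2)) has_integral Hf r - r * (1/r - Hf r)) {0..}"
    by (intro has_integral_diff H_int has_integral_mult_right q r)
  then show ?thesis
  proof (rule has_integral_eq_rhs[OF has_integral_eq[rotated]])
    fix v :: real assume "v \<in> {0..}"
    then have "r + v > 0" using r by auto
    then show "exp(-v)/(r+v) - r * (exp(-v)/(r+v)^2) = exp(-v)* v/((r+v) * (r+v))"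
      by (simp add: divide_simps power2_eq_square) (simp add: algebra_simps)
  next
    show "(1+r)*Hf r - 1 = Hf r - r * (1/r - Hf r)" using r by (simp add: field_simps)
  qed
qed

lemma Jx_int:
  assumes r: "r > 0" and x: "x > 0" and xr: "x \<noteq> r"
  shows "((\<lambda>v. exp(-v)* v/((x+v) * (r+v))) has_integral (x*Hf x - r*Hf r)/(x-r)) {0..}"
proof -
  have "((\<lambda>v. x * (exp(-v)/(x+v)) - r * (exp(-v)/(r+v))) has_integral x*Hf x - r*Hf r) {0..}"
    by (intro has_integral_diff has_integral_mult_right H_int r x)
  from has_integral_mult_right[OF this, of "1/(x-r)"]
  show ?thesis
  proof (rule has_integral_eq_rhs[OF has_integral_eq[rotated]])
    fix v :: real assume "v \<in> {0..}"
    then have "r + v > 0" "x + v > 0" using r x by auto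
    then show "1/(x-r) * (x * (exp(-v)/(x+v)) - r * (exp(-v)/(r+v))) = exp(-v)* v/((x+v) * (r+v))"
      using xr by (simp add: divide_simps) (simp add: algebra_simps)
  qed simp
qed

lemma err_bound:
  fixes s c :: real
  assumes s: "s > 0" and c: "c > 0"
  shows "0 \<le> c * (\<Sum>n. exp(-s)^n / (real n + c)) - c * Hf (c* s) - 1/2"
        "c * (\<Sum>n. exp(-s)^n / (real n + c)) - c * Hf (c* s) - 1/2 \<le> s + 4/c"
proof -
  define g where "g y = 1/(1-exp(-y)) - 1/y - 1/2" for y :: real
  define E where "E = c * (\<Sum>n. exp(-s)^n / (real n + c)) - c * Hf (c* s) - 1/2"
  have cs: "c* s > 0" using s c by simp
  have h3: "((\<lambda>v::real. exp(-v)/2) has_integral (1/2::real)) {0..}"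
    using has_integral_mult_left[OF has_integral_exp_minus_to_infinity[of 1 0], of "1/2"] by simp
  have "((\<lambda>v. exp(-v)/(1 - exp(-(s+v/c))) - c * (exp(-v)/(c* s+v)) - exp(-v)/2) has_integral E) {0..}"
    unfolding E_def
    by (intro has_integral_diff sum_int s c h3 has_integral_mult_right H_int cs)
  then have hE: "((\<lambda>v. exp(-v) * g (s+v/c)) has_integral E) {0..}"
  proof (rule has_integral_eq[rotated])
    fix v :: real assume v: "v \<in> {0..}"
    then have "c* s + v > 0" using cs by auto
    then have "1/(s+v/c) = c/(c* s+v)" using c by (simp add: field_simps)
    then show "exp(-v)/(1 - exp(-(s+v/c))) - c * (exp(-v)/(c* s+v)) - exp(-v)/2 = exp(-v) * g (s+v/c)"
      unfolding g_def by (simp add: algebra_simps)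
  qed
  have ypos: "s + v/c > 0" if "v \<ge> 0" for v using that s c by (auto intro: add_pos_nonneg)
  show "0 \<le> E"
    by (rule has_integral_nonneg[OF hE]) (use g_bound(1)[OF ypos] in \<open>auto simp: g_def\<close>)
  have hB: "((\<lambda>v. s * exp(-1* v) + (2/c) * exp(-(1/2)* v)) has_integral s * (exp(-1 * 0)/1) + (2/c) * (exp(-(1/2) * 0)/(1/2))) {0..}"
    by (intro has_integral_add has_integral_mult_right has_integral_exp_minus_to_infinity) auto
  have "E \<le> s * (exp(-1 * 0)/1) + (2/c) * (exp(-(1/2) * 0)/(1/2))"
  proof (rule has_integral_le[OF hE hB])
    fix v :: real assume "v \<in> {0..}"
    then have v: "v \<ge> 0" by simp
    have "exp(-v) * g (s+v/c) \<le> exp(-v) * ((s+v/c)/4)"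
      using g_bound(2)[OF ypos[OF v]] by (intro mult_left_mono) (auto simp: g_def)
    also have "\<dots> = s * exp(-v) / 4 + (v * exp(-v)) / (4 * c)" using c by (simp add: field_simps)
    also have "\<dots> \<le> s * exp(-v) + (2 * exp(-v/2)) / (4 * c)"
    proof (intro add_mono divide_right_mono)
      show "s * exp(-v) / 4 \<le> s * exp(-v)" using s by simp
      have "v \<le> 2 * exp(v/2)" using exp_ge_add_one_self[of "v/2"] v by linarith
      then have "v * exp(-v) \<le> 2 * exp(v/2) * exp(-v)" by (intro mult_right_mono) auto
      also have "2 * exp(v/2) * exp(-v) = 2 * exp(-v/2)" by (simp flip: exp_add)
      finally show "v * exp(-v) \<le> 2 * exp(-v/2)" .
    qed (use c in auto)
    also have "\<dots> \<le> s * exp(-1* v) + (2/c) * exp(-(1/2)* v)"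
      using c by (simp add: field_simps)
    finally show "exp(-v) * g (s+v/c) \<le> s * exp(-1* v) + (2/c) * exp(-(1/2)* v)" .
  qed
  then show "E \<le> s + 4/c" by simp
qed
lemma P1: fixes v x r :: real assumes "v \<ge> 0" "x > r" "r > 0"
  shows "exp(-v)* v/((x+v) * (r+v)) \<le> 1/r * exp(-v)"
proof -
  have "v * r \<le> (x+v) * (r+v)" using assms by (intro mult_mono) auto
  then have "v/((x+v) * (r+v)) \<le> 1/r" using assms by (simp add: divide_simps)
  then show ?thesis using assms mult_left_mono[of "v/((x+v) * (r+v))" "1/r" "exp(-v)"] by (simp add: mult.commute)
qed
lemma P2: fixes v x r :: real assumes "v \<ge> 0" "x > r" "r > 0"
  shows "exp(-v)* v/((r+v) * (r+v)) - exp(-v)* v/((x+v) * (r+v)) = exp(-v)* v * (x-r)/((x+v) * (r+v) * (r+v))"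
  using assms by (simp add: divide_simps) (simp add: algebra_simps)
lemma P3: fixes v x r :: real assumes "v \<ge> 0" "x > r" "r > 0"
  shows "exp(-v)* v * (x-r)/((x+v) * (r+v) * (r+v)) \<le> (x-r)/r^2 * exp(-v)"
proof -
  have "v * (r * r) \<le> (x+v) * ((r+v) * (r+v))" using assms by (intro mult_mono) auto
  then have "v/((x+v) * (r+v) * (r+v)) \<le> 1/r^2" using assms by (simp add: divide_simps power2_eq_square mult.assoc)
  then have "exp(-v) * (x-r) * (v/((x+v) * (r+v) * (r+v))) \<le> exp(-v) * (x-r) * (1/r^2)" using assms
    by (intro mult_left_mono) auto
  then show ?thesis by (simp add: mult.commute mult.left_commute)
qed

lemma J_bounds:
  fixes r x :: real
  assumes r: "r > 0" and xr: "x > r"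
  shows "0 \<le> (x * Hf x - r * Hf r)/(x-r)" "(x * Hf x - r * Hf r)/(x-r) \<le> 1/r"
        "\<bar>(x * Hf x - r * Hf r)/(x-r) - ((1+r) * Hf r - 1)\<bar> \<le> (x-r)/r^2"
proof -
  have x: "x > 0" using r xr by simp
  have hx: "((\<lambda>v. exp(-v) * v/((x+v) * (r+v))) has_integral (x * Hf x - r * Hf r)/(x-r)) {0..}"
    using Jx_int[OF r x] xr by simp
  have hr: "((\<lambda>v. exp(-v) * v/((r+v) * (r+v))) has_integral (1+r) * Hf r - 1) {0..}"
    using Jr_int[OF r] .
  show "0 \<le> (x * Hf x - r * Hf r)/(x-r)"
    by (rule has_integral_nonneg[OF hx]) (use r x in auto)
  have e1: "((\<lambda>v. 1/r * exp(-1 * v)) has_integral 1/r * (exp(-1 * 0)/1)) {0..}"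
    by (intro has_integral_mult_right has_integral_exp_minus_to_infinity) auto
  have "(x * Hf x - r * Hf r)/(x-r) \<le> 1/r * (exp(-1 * 0)/1)"
    by (rule has_integral_le[OF hx e1]) (use P1 xr r in auto)
  then show "(x * Hf x - r * Hf r)/(x-r) \<le> 1/r" by simp
  have hd: "((\<lambda>v. exp(-v) * v/((r+v) * (r+v)) - exp(-v) * v/((x+v) * (r+v))) has_integral
      ((1+r) * Hf r - 1) - (x * Hf x - r * Hf r)/(x-r)) {0..}"
    by (rule has_integral_diff[OF hr hx])
  have e2: "((\<lambda>v. (x-r)/r^2 * exp(-1 * v)) has_integral (x-r)/r^2 * (exp(-1 * 0)/1)) {0..}"
    by (intro has_integral_mult_right has_integral_exp_minus_to_infinity) auto
  have up: "((1+r) * Hf r - 1) - (x * Hf x - r * Hf r)/(x-r) \<le> (x-r)/r^2 * (exp(-1 * 0)/1)"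
  proof (rule has_integral_le[OF hd e2])
    fix v :: real assume "v \<in> {0..}"
    then have v: "v \<ge> 0" by simp
    show "exp(-v) * v/((r+v) * (r+v)) - exp(-v) * v/((x+v) * (r+v)) \<le> (x-r)/r^2 * exp(-1 * v)"
      using P2[OF v xr r] P3[OF v xr r] by simp
  qed
  have lo: "0 \<le> ((1+r) * Hf r - 1) - (x * Hf x - r * Hf r)/(x-r)"
  proof (rule has_integral_nonneg[OF hd])
    fix v :: real assume "v \<in> {0..}"
    then have v: "v \<ge> 0" by simp
    have "0 \<le> exp(-v) * v * (x-r)/((x+v) * (r+v) * (r+v))" using v xr r by simp
    then show "0 \<le> exp(-v) * v/((r+v) * (r+v)) - exp(-v) * v/((x+v) * (r+v))"
      using P2[OF v xr r] by simp
  qed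
  show "\<bar>(x * Hf x - r * Hf r)/(x-r) - ((1+r) * Hf r - 1)\<bar> \<le> (x-r)/r^2"
    using up lo by simp
qed

lemma main_bound:
  fixes \<omega> S :: real
  assumes w: "\<omega> > 0" and S0: "S > 0" and S1: "S < 1"
  defines "r \<equiv> 2 * sqrt (3 * \<omega>)"
  shows "\<bar>Xi S \<omega> - (xi_m1 r * sqrt 6 / S + xi_0 r)\<bar> \<le>
         (sqrt 6 * (1 + 4/r + 8/r^2 + 8 * sqrt 6/r^3)) * S"
proof -
  define s where "s = sqrt 6 * S"
  define A where "A = A_par S \<omega>"
  define B where "B = 2 * A"
  define c where "c = B + 2"
  define a where "a = r / s"
  define x where "x = c * s"
  have r: "r > 0" using w by (simp add: r_def)
  have s: "s > 0" using S0 by (simp add: s_def)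
  have s6: "s \<le> sqrt 6" using S0 S1 by (simp add: s_def)
  have a: "a > 0" using r s by (simp add: a_def)
  have A0: "A > 0" unfolding A_def A_par_def using w S0 by (intro real_sqrt_gt_zero add_pos_nonneg) auto
  have B0: "B > 0" using A0 by (simp add: B_def)
  have c: "c > 0" using B0 by (simp add: c_def)
  have sq6: "sqrt 6 * sqrt 6 = (6::real)" by simp
  have BB: "B^2 = 4 + 2 * \<omega> / S^2"
    unfolding B_def A_def A_par_def using w S0
    by (simp add: power_mult_distrib field_simps)
  have aa: "a^2 = 2 * \<omega> / S^2"
    unfolding a_def r_def s_def using w S0
    by (simp add: power_divide power_mult_distrib field_simps)
  have Bsq: "B^2 = 4 + a^2" using BB aa by simp
  have Ba: "B > a"
  proof -
    have "a^2 < B^2" using Bsq by simp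
    then show ?thesis using a B0 by (simp add: power_less_imp_less_base)
  qed
  have Ba4: "B - a \<le> 4/a"
  proof -
    have "(B - a) * (B + a) = 4" using Bsq by (simp add: algebra_simps power2_eq_square)
    then have "(B - a) * a \<le> 4" using Ba a by (smt (verit) mult_left_mono)
    then show ?thesis using a by (simp add: field_simps)
  qed
  have xr_eq: "x - r = s * (B + 2 - a)" unfolding x_def c_def a_def using s by (simp add: field_simps)
  have xr: "x > r" using xr_eq s Ba by (smt (verit) mult_pos_pos)
  have a4: "4/a = 4 * s / r" unfolding a_def using r s by simp
  have Xi_eq: "Xi S \<omega> = c * (\<Sum>n. exp(-s)^n / (real n + c))"
    unfolding Xi_def sigma_par_def c_def B_def A_def s_def by (simp add: add.assoc)
  define err where "err = Xi S \<omega> - c * Hf x - 1/2"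
  have err0: "0 \<le> err" and err1: "err \<le> s + 4/c"
    using err_bound[OF s c] unfolding err_def Xi_eq x_def by (simp_all add: mult.commute)
  define Jx where "Jx = (x * Hf x - r * Hf r)/(x-r)"
  define Jr where "Jr = (1+r) * Hf r - 1"
  have J0: "0 \<le> Jx" and J1: "Jx \<le> 1/r" and J2: "\<bar>Jx - Jr\<bar> \<le> (x-r)/r^2"
    using J_bounds[OF r xr] unfolding Jx_def Jr_def by auto
  have t1: "xi_m1 r * sqrt 6 / S = r * Hf r / s"
    unfolding xi_m1_def Hf_def s_def using S0 sq6
    by (simp add: field_simps)
  have t2: "xi_0 r = 2 * Jr + 1/2" unfolding xi_0_def Jr_def Hf_def by (simp add: algebra_simps)
  have t3: "c * Hf x = (r * Hf r + (x - r) * Jx) / s"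
    unfolding Jx_def x_def using s xr by (simp add: field_simps x_def)
  have D: "Xi S \<omega> - (xi_m1 r * sqrt 6 / S + xi_0 r) = err + (B - a) * Jx + 2 * (Jx - Jr)"
  proof -
    have "Xi S \<omega> = err + c * Hf x + 1/2" by (simp add: err_def)
    also have "c * Hf x = r * Hf r / s + (B + 2 - a) * Jx"
      unfolding t3 xr_eq using s by (simp add: field_simps)
    finally show ?thesis unfolding t1 t2 by (simp add: algebra_simps)
  qed
  have ca: "4/c \<le> 4/a" using Ba a c by (simp add: c_def frac_le)
  have b1: "\<bar>err\<bar> \<le> s + 4 * s / r" using err0 err1 ca a4 by simp
  have b2: "\<bar>(B - a) * Jx\<bar> \<le> (4 * s / r) * (1/r)"
  proof -
    have "(B - a) * Jx \<le> (4/a) * (1/r)" using Ba Ba4 J0 J1 a by (intro mult_mono) auto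
    moreover have "0 \<le> (B - a) * Jx" using Ba J0 by simp
    ultimately show ?thesis using a4 by simp
  qed
  have b3: "\<bar>2 * (Jx - Jr)\<bar> \<le> 2 * (s * (2 + 4 * s / r)) / r^2"
  proof -
    have "x - r \<le> s * (2 + 4 * s / r)" using xr_eq Ba4 a4 s by (simp add: mult_left_mono)
    then have "(x-r)/r^2 \<le> s * (2 + 4 * s / r) / r^2" using r by (simp add: divide_right_mono)
    then show ?thesis using J2 by simp
  qed
  have "\<bar>Xi S \<omega> - (xi_m1 r * sqrt 6 / S + xi_0 r)\<bar> \<le> s + 4 * s / r + (4 * s / r) * (1/r) + 2 * (s * (2 + 4 * s / r)) / r^2"
    unfolding D using b1 b2 b3 by linarith
  also have "\<dots> = s * (1 + 4/r + 8/r^2 + 8 * s/r^3)"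
    using r by (simp add: field_simps power2_eq_square power3_eq_cube)
  also have "\<dots> \<le> s * (1 + 4/r + 8/r^2 + 8 * sqrt 6/r^3)"
    using s6 s r by (intro mult_left_mono add_left_mono divide_right_mono) auto
  finally show ?thesis by (simp add: s_def mult_ac)
qed

theorem mainTheorem15:
  fixes \<omega> :: real
  assumes "\<omega> > 0"
  shows "(\<lambda>S. Xi S \<omega> - (xi_m1 (2 * sqrt (3 * \<omega>)) * sqrt 6 / S + xi_0 (2 * sqrt (3 * \<omega>))))
           \<in> O[at_right (0::real)](\<lambda>S. S)"
proof (rule bigoI[where c="sqrt 6 * (1 + 4/(2 * sqrt (3 * \<omega>)) + 8/(2 * sqrt (3 * \<omega>))^2 + 8 * sqrt 6/(2 * sqrt (3 * \<omega>))^3)"])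
  have "eventually (\<lambda>S::real. S > 0 \<and> S < 1) (at_right 0)"
    unfolding eventually_at_right_field by (intro exI[of _ 1]) auto
  then show "eventually (\<lambda>S. norm (Xi S \<omega> - (xi_m1 (2 * sqrt (3 * \<omega>)) * sqrt 6 / S + xi_0 (2 * sqrt (3 * \<omega>))))
      \<le> (sqrt 6 * (1 + 4/(2 * sqrt (3 * \<omega>)) + 8/(2 * sqrt (3 * \<omega>))^2 + 8 * sqrt 6/(2 * sqrt (3 * \<omega>))^3)) * norm S) (at_right 0)"
  proof (rule eventually_mono)
    fix S :: real assume "S > 0 \<and> S < 1"
    then show "norm (Xi S \<omega> - (xi_m1 (2 * sqrt (3 * \<omega>)) * sqrt 6 / S + xi_0 (2 * sqrt (3 * \<omega>))))
      \<le> (sqrt 6 * (1 + 4/(2 * sqrt (3 * \<omega>)) + 8/(2 * sqrt (3 * \<omega>))^2 + 8 * sqrt 6/(2 * sqrt (3 * \<omega>))^3)) * norm S"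
      using main_bound[OF assms, of S] by simp
  qed
qed

end
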